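(* Let $T>0$, $\rho$ a density operator on a finite-dimensional Hilbert space, and $H(\theta)=\sum_{j=1}^J\theta_jH_j$ with $\theta\in\mathbb{R}^J$ and $H_j$ Hermitian. Then for each $j$, $$\frac{\partial}{\partial\theta_j}\operatorname{Tr}\!\left[\operatorname{erf}\!\left(\tfrac{\sqrt2\,H(\theta)}{T}\right)\rho\right]=\frac{2}{T}\sqrt{\frac{2}{\pi}}\;\mathbb{E}_{t\sim\phi,\,s\sim\upsilon}\!\left[\operatorname{Re}\operatorname{Tr}\!\left[H_j\,e^{iH(\theta)2t/T}\,\mathcal{U}^{H(\theta)}_{2st/T}(\rho)\right]\right].$$
   Context: $\operatorname{erf}(x)\coloneqq\frac{2}{\sqrt\pi}\int_0^xe^{-y^2}dy$ (functional calculus for operators); $\phi(t)=\frac{1}{\sqrt{2\pi}}e^{-t^2/2}$ is the standard Gaussian density; $\upsilon$ is the uniform distribution on $[0,1]$; for Hermitian $K$, $\mathcal{U}^{K}_{t}(X)\coloneqq e^{-iKt}Xe^{iKt}$. *)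

theory Defs
  imports "HOL-Analysis.Analysis" "HOL-Probability.Probability"
begin

definition cmat_scale :: "complex \<Rightarrow> complex^'n^'m \<Rightarrow> complex^'n^'m" where
  "cmat_scale c A = (\<chi> i j. c * A $ i $ j)"

definition adjoint :: "complex^'n^'m \<Rightarrow> complex^'m^'n" where
  "adjoint A = (\<chi> i j. cnj (A $ j $ i))"

definition hermitian :: "complex^'n^'n \<Rightarrow> bool" where
  "hermitian A \<longleftrightarrow> adjoint A = A"

definition mtrace :: "complex^'n^'n \<Rightarrow> complex" where
  "mtrace A = (\<Sum>i\<in>UNIV. A $ i $ i)"

definition positive_semidef :: "complex^'n^'n \<Rightarrow> bool" where
  "positive_semidef A \<longleftrightarrow> hermitian A \<and>
     (\<forall>x::complex^'n. 0 \<le> Re (\<Sum>i\<in>UNIV. cnj (x $ i) * (A *v x) $ i))"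

definition density_operator :: "complex^'n^'n \<Rightarrow> bool" where
  "density_operator \<rho> \<longleftrightarrow> positive_semidef \<rho> \<and> mtrace \<rho> = 1"

fun mpow :: "complex^'n^'n \<Rightarrow> nat \<Rightarrow> complex^'n^'n" where
  "mpow A 0 = mat 1"
| "mpow A (Suc k) = A ** mpow A k"

definition mexp :: "complex^'n^'n \<Rightarrow> complex^'n^'n" where
  "mexp A = (\<Sum>k. (1 / fact k) *\<^sub>R mpow A k)"

text \<open>erf as an operator function, via the everywhere convergent Taylor series
  erf(x) = 2/sqrt(pi) * sum_n (-1)^n x^(2n+1) / (n! (2n+1)); for Hermitian arguments this
  coincides with the spectral functional calculus.\<close>
definition merf :: "complex^'n^'n \<Rightarrow> complex^'n^'n" where
  "merf A = (2 / sqrt pi) *\<^sub>R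
     (\<Sum>n. ((-1) ^ n / (fact n * (2 * real n + 1))) *\<^sub>R mpow A (2 * n + 1))"

definition Uevol :: "complex^'n^'n \<Rightarrow> real \<Rightarrow> complex^'n^'n \<Rightarrow> complex^'n^'n" where
  "Uevol K t X = mexp (cmat_scale (- \<i> * of_real t) K) ** X ** mexp (cmat_scale (\<i> * of_real t) K)"

definition Hsum :: "('J::finite \<Rightarrow> complex^'n^'n) \<Rightarrow> real^'J \<Rightarrow> complex^'n^'n" where
  "Hsum Hs \<theta> = (\<Sum>j\<in>UNIV. cmat_scale (of_real (\<theta> $ j)) (Hs j))"

definition vec_upd :: "real^'J \<Rightarrow> 'J \<Rightarrow> real \<Rightarrow> real^'J" where
  "vec_upd \<theta> j x = (\<chi> k. if k = j then x else \<theta> $ k)"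

end

theory Submission
  imports Defs
begin



lemma cs_nth[simp]: "cmat_scale c A $ i $ k = c * A $ i $ k"
  by (simp add: cmat_scale_def)

lemma mmul_nth: "(A ** B) $ i $ k = (\<Sum>l\<in>UNIV. A $ i $ l * B $ l $ k)"
  by (simp add: matrix_matrix_mult_def)

lemma norm_le_sum_comp: "norm (x::'a::real_normed_vector^'n) \<le> (\<Sum>i\<in>UNIV. norm (x $ i))"
  unfolding norm_vec_def by (rule L2_set_le_sum) auto

lemma norm_le_sum_comp2: "norm (A::complex^'n^'m) \<le> (\<Sum>i\<in>UNIV. \<Sum>k\<in>UNIV. norm (A $ i $ k))"
  by (rule order_trans[OF norm_le_sum_comp]) (intro sum_mono norm_le_sum_comp)

lemma norm_comp2_le: "norm (A $ i $ k) \<le> norm (A::complex^'n^'m)"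
proof -
  have "norm (A $ i $ k) \<le> norm (A $ i)" by (rule Finite_Cartesian_Product.norm_nth_le)
  also have "\<dots> \<le> norm A" by (rule Finite_Cartesian_Product.norm_nth_le)
  finally show ?thesis .
qed

definition NN :: "'n::finite itself \<Rightarrow> real" where "NN _ = real (CARD('n)) ^ 3"

lemma NN_ge1: "NN (TYPE('n::finite)) \<ge> 1"
proof -
  have "real (CARD('n)) \<ge> 1" by (simp add: Suc_le_eq)
  thus ?thesis unfolding NN_def by simp
qed

lemma norm_mmul: "norm ((A::complex^'n^'n) ** (B::complex^'n^'n)) \<le> NN TYPE('n) * norm A * norm B"
proof -
  have e: "norm ((A ** B) $ i $ k) \<le> real CARD('n) * (norm A * norm B)" for i k
  proof -
    have "norm ((A ** B) $ i $ k) \<le> (\<Sum>l\<in>UNIV. norm (A $ i $ l) * norm (B $ l $ k))"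
      unfolding mmul_nth by (rule order_trans[OF norm_sum]) (simp only: norm_mult order_refl)
    also have "\<dots> \<le> (\<Sum>l\<in>(UNIV::'n set). norm A * norm B)"
      by (intro sum_mono mult_mono norm_comp2_le) auto
    finally show ?thesis by simp
  qed
  have "norm (A ** B) \<le> (\<Sum>i\<in>(UNIV::'n set). \<Sum>k\<in>(UNIV::'n set). real CARD('n) * (norm A * norm B))"
    by (rule order_trans[OF norm_le_sum_comp2], rule sum_mono, rule sum_mono, rule e)
  also have "\<dots> = real CARD('n) * (real CARD('n) * (real CARD('n) * (norm A * norm B)))"
    by (simp only: sum_constant)
  also have "\<dots> = NN TYPE('n) * norm A * norm B" unfolding NN_def power3_eq_cube by (simp only: mult.assoc)
  finally show ?thesis .
qed

lemma scaleR_cs: "r *\<^sub>R (A::complex^'n^'m) = cmat_scale (of_real r) A"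
  by (simp add: vec_eq_iff) (simp add: scaleR_conv_of_real)
lemma cs_mmul_left0: "cmat_scale c A ** B = cmat_scale c (A ** B)"
  by (simp add: vec_eq_iff mmul_nth sum_distrib_left mult.assoc)
lemma cs_mmul_right0: "A ** cmat_scale c B = cmat_scale c (A ** B)"
  by (simp add: vec_eq_iff mmul_nth sum_distrib_left mult_ac)

lemma bb_mmul: "bounded_bilinear ((**) :: complex^'n^'n \<Rightarrow> complex^'n^'n \<Rightarrow> complex^'n^'n)"
proof (rule bounded_bilinear.intro)
  fix a a' b b' :: "complex^'n^'n" and r :: real
  show "(a + a') ** b = a ** b + a' ** b" by (simp add: vec_eq_iff mmul_nth distrib_right sum.distrib)
  show "a ** (b + b') = a ** b + a ** b'" by (simp add: vec_eq_iff mmul_nth distrib_left sum.distrib)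
  show "(r *\<^sub>R a) ** b = r *\<^sub>R (a ** b)" by (simp add: scaleR_cs cs_mmul_left0 cs_mmul_right0)
  show "a ** (r *\<^sub>R b) = r *\<^sub>R (a ** b)" by (simp add: scaleR_cs cs_mmul_left0 cs_mmul_right0)
  show "\<exists>K. \<forall>(x::complex^'n^'n) (y::complex^'n^'n). norm (x ** y) \<le> norm x * norm y * K"
  proof (rule exI[of _ "NN TYPE('n)"], intro allI)
    fix a b :: "complex^'n^'n"
    have "norm (a ** b) \<le> NN TYPE('n) * norm a * norm b" by (rule norm_mmul)
    thus "norm (a ** b) \<le> norm a * norm b * NN TYPE('n)" by (simp add: mult_ac)
  qed
qed

lemma mtrace_bl: "bounded_linear (mtrace :: complex^'n^'n \<Rightarrow> complex)"
proof (rule bounded_linear_intro[where K="real CARD('n)"])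
  fix A :: "complex^'n^'n"
  have "norm (mtrace A) \<le> (\<Sum>i\<in>(UNIV::'n set). norm A)"
    unfolding mtrace_def by (rule order_trans[OF norm_sum]) (intro sum_mono norm_comp2_le)
  thus "norm (mtrace A) \<le> norm A * real CARD('n)" by (simp add: mult.commute)
qed (auto simp: mtrace_def sum.distrib scaleR_sum_right)

lemma mtrace_comm: "mtrace ((A::complex^'n^'n) ** B) = mtrace (B ** A)"
  unfolding mtrace_def mmul_nth by (subst sum.swap) (simp add: mult.commute)

lemma cs_mmul_left[simp]: "cmat_scale c A ** B = cmat_scale c (A ** B)"
  by (simp add: vec_eq_iff mmul_nth sum_distrib_left mult.assoc)
lemma cs_mmul_right[simp]: "A ** cmat_scale c B = cmat_scale c (A ** B)"
  by (simp add: vec_eq_iff mmul_nth sum_distrib_left mult_ac)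
lemma cs_cs[simp]: "cmat_scale a (cmat_scale b A) = cmat_scale (a * b) A"
  by (simp add: vec_eq_iff mult.assoc)
lemma cs_one[simp]: "cmat_scale 1 A = A"
  by (simp add: vec_eq_iff)
lemma cs_zero[simp]: "cmat_scale 0 A = 0"
  by (simp add: vec_eq_iff)
lemma cs_add: "cmat_scale c (A + B) = cmat_scale c A + cmat_scale c B"
  by (simp add: vec_eq_iff distrib_left)
lemma cs_add_left: "cmat_scale (a + b) A = cmat_scale a A + cmat_scale b A"
  by (simp add: vec_eq_iff distrib_right)
lemma mtrace_cs[simp]: "mtrace (cmat_scale c A) = c * mtrace A"
  by (simp add: mtrace_def sum_distrib_left)
lemma cs_sum: "cmat_scale c (sum f S) = (\<Sum>x\<in>S. cmat_scale c (f x))"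
  by (induction S rule: infinite_finite_induct) (auto simp: cs_add vec_eq_iff)
lemma cs_sum_left: "cmat_scale (sum f S) A = (\<Sum>x\<in>S. cmat_scale (f x) A)"
  by (induction S rule: infinite_finite_induct) (auto simp: cs_add_left)

lemma norm_cs: "norm (cmat_scale c (A::complex^'n^'m)) = norm c * norm A"
proof -
  have r: "norm (cmat_scale c A $ i) = norm c * norm (A $ i)" for i
  proof -
    have "norm (cmat_scale c A $ i) = L2_set (\<lambda>k. norm c * norm (A $ i $ k)) UNIV"
      by (simp add: norm_vec_def norm_mult)
    also have "\<dots> = norm c * norm (A $ i)"
      by (simp add: norm_vec_def L2_set_right_distrib)
    finally show ?thesis .
  qed
  show ?thesis unfolding norm_vec_def[of "cmat_scale c A"] r
    by (simp add: L2_set_right_distrib norm_vec_def[of A])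
qed

lemma mmul_bl_left: "bounded_linear (\<lambda>X::complex^'n^'n. (A::complex^'n^'n) ** X)"
  using bounded_bilinear.bounded_linear_right[OF bb_mmul] .
lemma mmul_bl_right: "bounded_linear (\<lambda>X::complex^'n^'n. X ** (A::complex^'n^'n))"
  using bounded_bilinear.bounded_linear_left[OF bb_mmul] .

lemma mpow_cs: "mpow (cmat_scale c A) k = cmat_scale (c ^ k) (mpow A k)"
  by (induction k) (auto simp: mult.commute)

lemma mpow_Suc': "mpow A (Suc k) = mpow A k ** A"
  by (induction k) (auto simp: matrix_mul_assoc)

lemma mpow_add: "mpow A (p + q) = mpow A p ** mpow A q"
  by (induction p) (auto simp: matrix_mul_assoc)

lemma norm_mpow: "norm (mpow (A::complex^'n^'n) k) \<le> norm (mat 1 :: complex^'n^'n) * (NN TYPE('n) * norm A) ^ k"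
proof (induction k)
  case (Suc k)
  have "norm (mpow A (Suc k)) \<le> NN TYPE('n) * norm A * norm (mpow A k)"
    using norm_mmul by simp
  also have "\<dots> \<le> NN TYPE('n) * norm A * (norm (mat 1 :: complex^'n^'n) * (NN TYPE('n) * norm A) ^ k)"
    using NN_ge1[where 'n='n] by (intro mult_left_mono Suc) auto
  finally show ?case by (simp add: mult_ac)
qed simp



lemma Cauchy_product_sums_bb:
  fixes a :: "nat \<Rightarrow> 'a::banach" and b :: "nat \<Rightarrow> 'b::banach" and prod :: "'a \<Rightarrow> 'b \<Rightarrow> 'c::real_normed_vector"
  assumes bb: "bounded_bilinear prod" and a: "summable (\<lambda>k. norm (a k))"
    and b: "summable (\<lambda>k. norm (b k))"
  shows "(\<lambda>k. \<Sum>i\<le>k. prod (a i) (b (k - i))) sums prod (\<Sum>k. a k) (\<Sum>k. b k)"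
proof -
  obtain K where K: "0 < K" and Kb: "\<And>x y. norm (prod x y) \<le> norm x * norm y * K"
    using bounded_bilinear.pos_bounded[OF bb] by blast
  let ?S1 = "\<lambda>n::nat. {..<n} \<times> {..<n}"
  let ?S2 = "\<lambda>n::nat. {(i,j). i + j < n}"
  have S1_mono: "\<And>m n. m \<le> n \<Longrightarrow> ?S1 m \<subseteq> ?S1 n" by auto
  have S2_le_S1: "\<And>n. ?S2 n \<subseteq> ?S1 n" by auto
  have S1_le_S2: "\<And>n. ?S1 (n div 2) \<subseteq> ?S2 n" by auto
  have finite_S1: "\<And>n. finite (?S1 n)" by simp
  with S2_le_S1 have finite_S2: "\<And>n. finite (?S2 n)" by (rule finite_subset)
  let ?g = "\<lambda>(i,j). prod (a i) (b j)"
  let ?f = "\<lambda>(i,j). norm (a i) * norm (b j) * K"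
  have f_nonneg: "\<And>x. 0 \<le> ?f x" using K by auto
  then have norm_sum_f: "\<And>A. norm (sum ?f A) = sum ?f A"
    unfolding real_norm_def
    by (simp only: abs_of_nonneg sum_nonneg [rule_format])
  have "(\<lambda>n. prod (\<Sum>k<n. a k) (\<Sum>k<n. b k)) \<longlonglongrightarrow> prod (\<Sum>k. a k) (\<Sum>k. b k)"
    by (intro bounded_bilinear.tendsto[OF bb] summable_LIMSEQ summable_norm_cancel [OF a] summable_norm_cancel [OF b])
  moreover have "prod (\<Sum>k<n. a k) (\<Sum>k<n. b k) = sum ?g (?S1 n)" for n
  proof -
    have "prod (\<Sum>k<n. a k) (\<Sum>k<n. b k) = (\<Sum>i<n. prod (a i) (\<Sum>k<n. b k))"
      by (rule bounded_bilinear.sum_left[OF bb])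
    also have "\<dots> = (\<Sum>i<n. \<Sum>j<n. prod (a i) (b j))"
      by (simp add: bounded_bilinear.sum_right[OF bb])
    finally show ?thesis by (simp add: sum.cartesian_product)
  qed
  ultimately have 1: "(\<lambda>n. sum ?g (?S1 n)) \<longlonglongrightarrow> prod (\<Sum>k. a k) (\<Sum>k. b k)"
    by simp
  have "(\<lambda>n. (\<Sum>k<n. norm (a k)) * (\<Sum>k<n. norm (b k)) * K) \<longlonglongrightarrow> (\<Sum>k. norm (a k)) * (\<Sum>k. norm (b k)) * K"
    using a b by (intro tendsto_mult summable_LIMSEQ tendsto_const)
  moreover have "(\<Sum>k<n. norm (a k)) * (\<Sum>k<n. norm (b k)) * K = sum ?f (?S1 n)" for n
  proof -
    have "(\<Sum>k<n. norm (a k)) * (\<Sum>k<n. norm (b k)) * K = (\<Sum>i<n. \<Sum>j<n. norm (a i) * norm (b j)) * K"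
      by (simp only: sum_product)
    also have "\<dots> = (\<Sum>i<n. \<Sum>j<n. norm (a i) * norm (b j) * K)"
      by (simp only: sum_distrib_right)
    finally show ?thesis by (simp only: sum.cartesian_product)
  qed
  ultimately have "(\<lambda>n. sum ?f (?S1 n)) \<longlonglongrightarrow> (\<Sum>k. norm (a k)) * (\<Sum>k. norm (b k)) * K"
    by simp
  then have "convergent (\<lambda>n. sum ?f (?S1 n))"
    by (rule convergentI)
  then have Cauchy: "Cauchy (\<lambda>n. sum ?f (?S1 n))"
    by (rule convergent_Cauchy)
  have "Zfun (\<lambda>n. sum ?f (?S1 n - ?S2 n)) sequentially"
  proof (rule ZfunI, simp only: eventually_sequentially norm_sum_f)
    fix r :: real
    assume r: "0 < r"
    from CauchyD [OF Cauchy r] obtain N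
      where "\<forall>m\<ge>N. \<forall>n\<ge>N. norm (sum ?f (?S1 m) - sum ?f (?S1 n)) < r" ..
    then have "\<And>m n. N \<le> n \<Longrightarrow> n \<le> m \<Longrightarrow> norm (sum ?f (?S1 m - ?S1 n)) < r"
      by (simp only: sum_diff finite_S1 S1_mono)
    then have N: "\<And>m n. N \<le> n \<Longrightarrow> n \<le> m \<Longrightarrow> sum ?f (?S1 m - ?S1 n) < r"
      by (simp only: norm_sum_f)
    show "\<exists>N. \<forall>n\<ge>N. sum ?f (?S1 n - ?S2 n) < r"
    proof (intro exI allI impI)
      fix n
      assume "2 * N \<le> n"
      then have n: "N \<le> n div 2" by simp
      have "sum ?f (?S1 n - ?S2 n) \<le> sum ?f (?S1 n - ?S1 (n div 2))"
        by (intro sum_mono2 finite_Diff finite_S1 f_nonneg Diff_mono subset_refl S1_le_S2)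
      also have "\<dots> < r"
        using n div_le_dividend by (rule N)
      finally show "sum ?f (?S1 n - ?S2 n) < r" .
    qed
  qed
  then have "Zfun (\<lambda>n. sum ?g (?S1 n - ?S2 n)) sequentially"
    apply (rule Zfun_le [rule_format])
    apply (simp only: norm_sum_f)
    apply (rule order_trans [OF norm_sum sum_mono])
    apply (auto simp add: Kb)
    done
  then have 2: "(\<lambda>n. sum ?g (?S1 n) - sum ?g (?S2 n)) \<longlonglongrightarrow> 0"
    unfolding tendsto_Zfun_iff diff_0_right
    by (simp only: sum_diff finite_S1 S2_le_S1)
  with 1 have "(\<lambda>n. sum ?g (?S2 n)) \<longlonglongrightarrow> prod (\<Sum>k. a k) (\<Sum>k. b k)"
    by (rule Lim_transform2)
  then show ?thesis
    by (simp only: sums_def sum.triangle_reindex)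
qed

lemma summable_norm_cs_mpow:
  "summable (\<lambda>k. norm (cmat_scale (z ^ k / fact k) (mpow (H::complex^'n^'n) k)))"
proof -
  define c where "c = norm (mat 1 :: complex^'n^'n)"
  define R where "R = norm z * NN TYPE('n) * norm H"
  have bound: "norm (norm (cmat_scale (z ^ k / fact k) (mpow H k))) \<le> c * (inverse (fact k) * R ^ k)" for k
  proof -
    have "norm (norm (cmat_scale (z ^ k / fact k) (mpow H k))) = norm z ^ k / fact k * norm (mpow H k)"
      by (simp add: norm_cs norm_divide norm_power)
    also have "\<dots> \<le> norm z ^ k / fact k * (c * (NN TYPE('n) * norm H) ^ k)"
      unfolding c_def by (intro mult_left_mono norm_mpow) auto
    also have "\<dots> = c * (inverse (fact k) * R ^ k)"
      unfolding R_def by (simp add: power_mult_distrib divide_inverse mult_ac)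
    finally show ?thesis .
  qed
  have s: "summable (\<lambda>k. c * (inverse (fact k) * R ^ k))"
    by (intro summable_mult summable_exp)
  show ?thesis by (rule summable_comparison_test'[OF s bound])
qed

lemma mexp_cs_def: "mexp (cmat_scale z H) = (\<Sum>k. cmat_scale (z ^ k / fact k) (mpow H k))"
  unfolding mexp_def by (simp add: mpow_cs scaleR_cs)

lemma mexp_cs_sums: "(\<lambda>k. cmat_scale (z ^ k / fact k) (mpow H k)) sums mexp (cmat_scale z H)"
  unfolding mexp_cs_def by (rule summable_sums, rule summable_norm_cancel, rule summable_norm_cs_mpow)

lemma mexp_add:
  fixes H :: "complex^'n^'n"
  shows "mexp (cmat_scale a H) ** mexp (cmat_scale b H) = mexp (cmat_scale (a + b) H)"
proof -
  have "(\<lambda>m. \<Sum>p\<le>m. cmat_scale (a ^ p / fact p) (mpow H p) ** cmat_scale (b ^ (m - p) / fact (m - p)) (mpow H (m - p)))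
        sums ((\<Sum>k. cmat_scale (a ^ k / fact k) (mpow H k)) ** (\<Sum>k. cmat_scale (b ^ k / fact k) (mpow H k)))"
    by (rule Cauchy_product_sums_bb[OF bb_mmul summable_norm_cs_mpow summable_norm_cs_mpow])
  moreover have "(\<Sum>p\<le>m. cmat_scale (a ^ p / fact p) (mpow H p) ** cmat_scale (b ^ (m - p) / fact (m - p)) (mpow H (m - p)))
       = cmat_scale ((a + b) ^ m / fact m) (mpow H m)" for m
  proof -
    have "(\<Sum>p\<le>m. cmat_scale (a ^ p / fact p) (mpow H p) ** cmat_scale (b ^ (m - p) / fact (m - p)) (mpow H (m - p)))
       = (\<Sum>p\<le>m. cmat_scale (a ^ p / fact p * (b ^ (m - p) / fact (m - p))) (mpow H m))"
      by (intro sum.cong refl) (simp add: mpow_add[symmetric] mult_ac)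
    also have "\<dots> = cmat_scale (\<Sum>p\<le>m. a ^ p / fact p * (b ^ (m - p) / fact (m - p))) (mpow H m)"
      by (simp add: cs_sum_left)
    also have "(\<Sum>p\<le>m. a ^ p / fact p * (b ^ (m - p) / fact (m - p))) = (a + b) ^ m / fact m"
    proof -
      have "(a + b) ^ m / fact m = (\<Sum>p\<le>m. of_nat (m choose p) * a ^ p * b ^ (m - p) / fact m)"
        by (simp add: binomial_ring sum_divide_distrib)
      also have "\<dots> = (\<Sum>p\<le>m. a ^ p / fact p * (b ^ (m - p) / fact (m - p)))"
      proof (intro sum.cong refl)
        fix p assume "p \<in> {..m}"
        hence pm: "p \<le> m" by simp
        have fm: "(fact m :: complex) = of_nat (m choose p) * (fact p * fact (m-p))"
          using binomial_fact_lemma[OF pm] by (metis of_nat_fact of_nat_mult mult.commute)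
        have nz: "(of_nat (m choose p) :: complex) \<noteq> 0" using pm by simp
        show "of_nat (m choose p) * a ^ p * b ^ (m - p) / fact m = a ^ p / fact p * (b ^ (m - p) / fact (m - p))"
          unfolding fm using nz by simp
      qed
      finally show ?thesis by simp
    qed
    finally show ?thesis .
  qed
  ultimately have "(\<lambda>m. cmat_scale ((a + b) ^ m / fact m) (mpow H m)) sums (mexp (cmat_scale a H) ** mexp (cmat_scale b H))"
    unfolding mexp_cs_def by simp
  from this mexp_cs_sums[of "a + b" H] show ?thesis by (rule sums_unique2)
qed



fun dpow :: "complex^'n^'n \<Rightarrow> complex^'n^'n \<Rightarrow> nat \<Rightarrow> complex^'n^'n" where
  "dpow A C 0 = 0"
| "dpow A C (Suc m) = C ** mpow A m + A ** dpow A C m"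

lemma cs_0_right[simp]: "cmat_scale h 0 = 0"
  by (simp add: vec_eq_iff)

lemma bl_cs_left: "bounded_linear (\<lambda>h::complex. cmat_scale h (C::complex^'n^'m))"
proof (rule bounded_linear_intro[where K="norm C"])
  fix x y :: complex and r :: real
  show "cmat_scale (x + y) C = cmat_scale x C + cmat_scale y C" by (rule cs_add_left)
  show "cmat_scale (r *\<^sub>R x) C = r *\<^sub>R cmat_scale x C"
    by (simp add: scaleR_cs scaleR_conv_of_real)
  show "norm (cmat_scale x C) \<le> norm x * norm C" by (simp add: norm_cs)
qed

lemma deriv_mpow:
  fixes B C :: "complex^'n^'n"
  shows "((\<lambda>z. mpow (B + cmat_scale z C) m) has_derivative
          (\<lambda>h. cmat_scale h (dpow (B + cmat_scale z C) C m))) (at z)"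
proof (induction m)
  case 0
  show ?case by simp
next
  case (Suc m)
  have dA: "((\<lambda>z. B + cmat_scale z C) has_derivative (\<lambda>h. cmat_scale h C)) (at z)"
    using has_derivative_add[OF has_derivative_const bounded_linear_imp_has_derivative[OF bl_cs_left]]
    by simp
  have "((\<lambda>z. (B + cmat_scale z C) ** mpow (B + cmat_scale z C) m) has_derivative
      (\<lambda>h. (B + cmat_scale z C) ** cmat_scale h (dpow (B + cmat_scale z C) C m) + cmat_scale h C ** mpow (B + cmat_scale z C) m)) (at z)"
    by (rule bounded_bilinear.FDERIV[OF bb_mmul dA Suc])
  then have "((\<lambda>z. mpow (B + cmat_scale z C) (Suc m)) has_derivative
      (\<lambda>h. (B + cmat_scale z C) ** cmat_scale h (dpow (B + cmat_scale z C) C m) + cmat_scale h C ** mpow (B + cmat_scale z C) m)) (at z)"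
    by simp
  then show ?case
    by (rule has_derivative_eq_rhs) (simp add: cs_add fun_eq_iff add.commute)
qed

lemma mtrace_rho_bl: "bounded_linear (\<lambda>X::complex^'n^'n. mtrace (X ** \<rho>))"
  by (rule bounded_linear_compose[OF mtrace_bl mmul_bl_right])

lemma deriv_tr_mpow:
  fixes B C \<rho> :: "complex^'n^'n"
  shows "((\<lambda>z. mtrace (mpow (B + cmat_scale z C) m ** \<rho>)) has_field_derivative
          mtrace (dpow (B + cmat_scale z C) C m ** \<rho>)) (at z)"
  unfolding has_field_derivative_def
  using bounded_linear.has_derivative[OF mtrace_rho_bl[of \<rho>] deriv_mpow[of B C m z]]
  by (rule has_derivative_eq_rhs) (simp add: fun_eq_iff mult.commute)

lemma norm_dpow:
  fixes A C :: "complex^'n^'n"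
  assumes Q1: "Q \<ge> 1" and QA: "NN TYPE('n) * norm A \<le> Q"
  shows "norm (dpow A C m) \<le> real m * (NN TYPE('n) * norm C * norm (mat 1 :: complex^'n^'n)) * Q ^ m"
proof (induction m)
  case 0 show ?case by simp
next
  case (Suc m)
  let ?L = "NN TYPE('n) * norm C * norm (mat 1 :: complex^'n^'n)"
  have L0: "?L \<ge> 0" using NN_ge1[where 'n='n] by simp
  have p: "(NN TYPE('n) * norm A) ^ m \<le> Q ^ m"
    using QA NN_ge1[where 'n='n] by (intro power_mono) auto
  have qm: "Q ^ m \<le> Q ^ Suc m" using Q1 by (simp add: power_increasing)
  have "norm (dpow A C (Suc m)) \<le> norm (C ** mpow A m) + norm (A ** dpow A C m)"
    by (simp add: norm_triangle_ineq)
  also have "norm (C ** mpow A m) \<le> NN TYPE('n) * norm C * (norm (mat 1 :: complex^'n^'n) * (NN TYPE('n) * norm A) ^ m)"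
    using norm_mmul[of C "mpow A m"] norm_mpow[of A m] NN_ge1[where 'n='n]
    by (smt (verit, best) mult_left_mono norm_ge_zero zero_le_mult_iff)
  also have "\<dots> \<le> ?L * Q ^ Suc m"
    using mult_left_mono[OF order_trans[OF p qm] L0] by (simp add: mult_ac)
  also have "norm (A ** dpow A C m) \<le> NN TYPE('n) * norm A * norm (dpow A C m)"
    by (rule norm_mmul)
  also have "\<dots> \<le> Q * (real m * ?L * Q ^ m)"
    by (rule mult_mono[OF QA Suc.IH]) (use Q1 in auto)
  also have "?L * Q ^ Suc m + Q * (real m * ?L * Q ^ m) = real (Suc m) * ?L * Q ^ Suc m"
    by (simp add: algebra_simps)
  finally show ?case by simp
qed

lemma tr_scaleR: "mtrace ((r *\<^sub>R X) ** (\<rho>::complex^'n^'n)) = of_real r * mtrace (X ** \<rho>)"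
  by (simp add: scaleR_cs)

definition kap :: "nat \<Rightarrow> complex" where
  "kap n = complex_of_real (2 / sqrt pi * ((-1) ^ n / (fact n * (2 * real n + 1))))"

lemma norm_kap: "norm (kap n) \<le> 2 / sqrt pi * inverse (fact n)"
proof -
  have "norm (kap n) = 2 / sqrt pi * (1 / (fact n * (2 * real n + 1)))"
    unfolding kap_def norm_of_real by (simp add: abs_mult)
  also have "\<dots> \<le> 2 / sqrt pi * inverse (fact n)"
  proof (intro mult_left_mono)
    have "fact n \<le> fact n * (2 * real n + 1)" by simp
    thus "1 / (fact n * (2 * real n + 1)) \<le> inverse (fact n)"
      by (simp add: inverse_eq_divide frac_le)
  qed simp
  finally show ?thesis .
qed

lemma merf_sums:
  fixes M \<rho> :: "complex^'n^'n"
  shows "(\<lambda>n. kap n * mtrace (mpow M (2 * n + 1) ** \<rho>)) sums mtrace (merf M ** \<rho>)"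
proof -
  define X where "X n = ((-1) ^ n / (fact n * (2 * real n + 1))) *\<^sub>R mpow M (2 * n + 1)" for n
  define c where "c = norm (mat 1 :: complex^'n^'n)"
  define Q where "Q = NN TYPE('n) * norm M"
  have Q0: "Q \<ge> 0" unfolding Q_def using NN_ge1[where 'n='n] by simp
  have bound: "norm (X n) \<le> c * Q * (inverse (fact n) * (Q^2) ^ n)" for n
  proof -
    have "norm (X n) = 1 / (fact n * (2 * real n + 1)) * norm (mpow M (2 * n + 1))"
      by (simp add: X_def abs_mult)
    also have "\<dots> \<le> inverse (fact n) * (c * Q ^ (2 * n + 1))"
    proof (intro mult_mono)
      have "fact n \<le> fact n * (2 * real n + 1)" by simp
      thus "1 / (fact n * (2 * real n + 1)) \<le> inverse (fact n)"
        by (simp add: inverse_eq_divide frac_le)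
      show "norm (mpow M (2 * n + 1)) \<le> c * Q ^ (2 * n + 1)"
        unfolding c_def Q_def by (rule norm_mpow)
    qed auto
    also have "\<dots> = c * Q * (inverse (fact n) * (Q^2) ^ n)"
    proof -
      have e: "Q ^ (2 * n + 1) = Q * (Q^2) ^ n" by (simp add: power_mult)
      show ?thesis unfolding e by (simp only: mult_ac)
    qed
    finally show ?thesis .
  qed
  have sX: "summable X"
    by (rule summable_comparison_test'[OF _ bound])
       (intro summable_mult summable_exp)
  have "(\<lambda>n. mtrace (X n ** \<rho>)) sums mtrace (suminf X ** \<rho>)"
    by (rule bounded_linear.sums[OF mtrace_rho_bl summable_sums[OF sX]])
  hence "(\<lambda>n. (2 / sqrt pi) *\<^sub>R mtrace (X n ** \<rho>)) sums ((2 / sqrt pi) *\<^sub>R mtrace (suminf X ** \<rho>))"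
    by (rule sums_scaleR_right)
  moreover have "(2 / sqrt pi) *\<^sub>R mtrace (suminf X ** \<rho>) = mtrace (merf M ** \<rho>)"
    unfolding merf_def X_def tr_scaleR by (simp add: scaleR_conv_of_real)
  moreover have "(2 / sqrt pi) *\<^sub>R mtrace (X n ** \<rho>) = kap n * mtrace (mpow M (2 * n + 1) ** \<rho>)" for n
    unfolding X_def kap_def tr_scaleR by (simp add: scaleR_conv_of_real)
  ultimately show ?thesis by simp
qed



lemma three_pow: "real (2 * n + 1) \<le> 3 ^ n"
proof -
  have "(2::nat) * n + 1 \<le> 3 ^ n" by (induction n) auto
  hence "real (2 * n + 1) \<le> real (3 ^ n)" by (simp only: of_nat_le_iff)
  thus ?thesis by simp
qed

lemma norm_tr_mul: "norm (mtrace ((D::complex^'n^'n) ** \<rho>)) \<le> real CARD('n) * NN TYPE('n) * norm D * norm \<rho>"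
proof -
  have "norm (mtrace (D ** \<rho>)) \<le> (\<Sum>i\<in>(UNIV::'n set). norm (D ** \<rho>))"
    unfolding mtrace_def by (rule order_trans[OF norm_sum]) (intro sum_mono norm_comp2_le)
  also have "\<dots> = real CARD('n) * norm (D ** \<rho>)" by simp
  also have "\<dots> \<le> real CARD('n) * (NN TYPE('n) * norm D * norm \<rho>)"
    by (intro mult_left_mono norm_mmul) auto
  finally show ?thesis by (simp add: mult_ac)
qed

lemma lhs_deriv:
  fixes B C \<rho> :: "complex^'n^'n"
  shows "((\<lambda>z. mtrace (merf (B + cmat_scale z C) ** \<rho>)) has_field_derivative
           (\<Sum>n. kap n * mtrace (dpow B C (2 * n + 1) ** \<rho>))) (at 0)"
proof -
  define f where "f n z = kap n * mtrace (mpow (B + cmat_scale z C) (2 * n + 1) ** \<rho>)" for n z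
  define f' where "f' n z = kap n * mtrace (dpow (B + cmat_scale z C) C (2 * n + 1) ** \<rho>)" for n z
  define S where "S = ball (0::complex) 1"
  define R where "R = norm B + norm C"
  define Q where "Q = max 1 (NN TYPE('n) * R)"
  define L where "L = NN TYPE('n) * norm C * norm (mat 1 :: complex^'n^'n)"
  define K0 where "K0 = 2 / sqrt pi * (real CARD('n) * NN TYPE('n) * norm \<rho>) * L * Q"
  have Q1: "Q \<ge> 1" unfolding Q_def by simp
  have L0: "L \<ge> 0" unfolding L_def using NN_ge1[where 'n='n] by simp
  have deriv: "(f n has_field_derivative f' n z) (at z within S)" for n z
    unfolding f_def f'_def
    by (rule has_field_derivative_at_within, rule DERIV_cmult, rule deriv_tr_mpow)
  have bound: "norm (f' n z) \<le> K0 * (inverse (fact n) * (3 * Q^2) ^ n)" if z: "z \<in> S" for n z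
  proof -
    have nz: "norm z \<le> 1" using z unfolding S_def by simp
    have "norm (B + cmat_scale z C) \<le> norm B + norm z * norm C"
      by (rule order_trans[OF norm_triangle_ineq]) (simp add: norm_cs)
    also have "\<dots> \<le> R" unfolding R_def using nz by (simp add: mult_left_le_one_le)
    finally have "NN TYPE('n) * norm (B + cmat_scale z C) \<le> NN TYPE('n) * R"
      using NN_ge1[where 'n='n] by (intro mult_left_mono) auto
    hence QA: "NN TYPE('n) * norm (B + cmat_scale z C) \<le> Q" unfolding Q_def by linarith
    have nd: "norm (dpow (B + cmat_scale z C) C (2 * n + 1)) \<le> real (2 * n + 1) * L * Q ^ (2 * n + 1)"
      unfolding L_def by (rule norm_dpow[OF Q1 QA])
    have "norm (f' n z) \<le> 2 / sqrt pi * inverse (fact n) * (real CARD('n) * NN TYPE('n) * norm (dpow (B + cmat_scale z C) C (2 * n + 1)) * norm \<rho>)"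
      unfolding f'_def norm_mult by (intro mult_mono norm_kap norm_tr_mul) auto
    also have "\<dots> \<le> 2 / sqrt pi * inverse (fact n) * (real CARD('n) * NN TYPE('n) * (real (2 * n + 1) * L * Q ^ (2 * n + 1)) * norm \<rho>)"
      using NN_ge1[where 'n='n] by (intro mult_left_mono mult_right_mono nd) auto
    also have "\<dots> \<le> 2 / sqrt pi * inverse (fact n) * (real CARD('n) * NN TYPE('n) * (3 ^ n * L * Q ^ (2 * n + 1)) * norm \<rho>)"
      using NN_ge1[where 'n='n] L0 Q1 by (intro mult_left_mono mult_right_mono three_pow) auto
    also have "\<dots> = K0 * (inverse (fact n) * (3 * Q^2) ^ n)"
    proof -
      have e: "Q ^ (2 * n + 1) = Q * (Q^2) ^ n" by (simp add: power_mult)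
      show ?thesis unfolding e K0_def power_mult_distrib by (simp only: mult_ac)
    qed
    finally show ?thesis .
  qed
  have unif: "uniformly_convergent_on S (\<lambda>n z. \<Sum>i<n. f' i z)"
    by (rule Weierstrass_m_test'[OF bound]) (assumption, intro summable_mult summable_exp)
  have sums: "(\<lambda>n. f n z) sums mtrace (merf (B + cmat_scale z C) ** \<rho>)" for z
    unfolding f_def by (rule merf_sums)
  have "((\<lambda>z. \<Sum>n. f n z) has_field_derivative (\<Sum>n. f' n 0)) (at 0)"
    by (rule has_field_derivative_series'(2)[OF _ deriv unif, of 0])
       (auto simp: S_def sums_summable[OF sums])
  moreover have "(\<lambda>z. \<Sum>n. f n z) = (\<lambda>z. mtrace (merf (B + cmat_scale z C) ** \<rho>))"
    using sums by (simp add: fun_eq_iff sums_iff)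
  moreover have "f' n 0 = kap n * mtrace (dpow B C (2 * n + 1) ** \<rho>)" for n
    by (simp add: f'_def)
  ultimately show ?thesis by simp
qed

lemma lhs_real:
  fixes B C \<rho> :: "complex^'n^'n"
  assumes G: "\<And>x. G x = mtrace (merf (B + cmat_scale (of_real (x - x0)) C) ** \<rho>)"
  shows "(G has_vector_derivative (\<Sum>n. kap n * mtrace (dpow B C (2 * n + 1) ** \<rho>))) (at x0)"
proof -
  have f: "((\<lambda>x. complex_of_real (x - x0)) has_vector_derivative 1) (at x0)"
    by (auto intro!: derivative_eq_intros)
  have g: "((\<lambda>z. mtrace (merf (B + cmat_scale z C) ** \<rho>)) has_field_derivative
           (\<Sum>n. kap n * mtrace (dpow B C (2 * n + 1) ** \<rho>))) (at ((\<lambda>x. complex_of_real (x - x0)) x0))"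
    using lhs_deriv[of B C \<rho>] by simp
  have "G = (\<lambda>z. mtrace (merf (B + cmat_scale z C) ** \<rho>)) \<circ> (\<lambda>x. complex_of_real (x - x0))"
    using G by (simp add: fun_eq_iff)
  with field_vector_diff_chain_at[OF f g] show ?thesis by simp
qed



lemma mmul_sum_right: "(A::complex^'n^'n) ** sum f S = (\<Sum>x\<in>S. A ** f x)"
  by (induction S rule: infinite_finite_induct) (auto simp: matrix_add_ldistrib)

lemma mmul_sum_left: "sum (f::_ \<Rightarrow> complex^'n^'n) S ** (A::complex^'n^'n) = (\<Sum>x\<in>S. f x ** A)"
  by (induction S rule: infinite_finite_induct) (auto simp: bounded_bilinear.add_left[OF bb_mmul])

lemma mtrace_sum: "mtrace (sum f S) = (\<Sum>x\<in>S. mtrace (f x))"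
  by (induction S rule: infinite_finite_induct) (auto simp: mtrace_def sum.distrib)

lemma mtrace_zero[simp]: "mtrace 0 = 0"
  by (simp add: mtrace_def)

lemma dpow_formula:
  fixes H K :: "complex^'n^'n"
  shows "dpow (cmat_scale a H) (cmat_scale a K) m =
         cmat_scale (a ^ m) (\<Sum>k<m. mpow H k ** K ** mpow H (m - 1 - k))"
proof (induction m)
  case 0 show ?case by (simp add: vec_eq_iff)
next
  case (Suc m)
  have "(\<Sum>k<Suc m. mpow H k ** K ** mpow H (Suc m - 1 - k)) =
        mpow H 0 ** K ** mpow H m + (\<Sum>k<m. mpow H (Suc k) ** K ** mpow H (m - Suc k))"
    by (subst sum.lessThan_Suc_shift) simp
  also have "\<dots> = K ** mpow H m + H ** (\<Sum>k<m. mpow H k ** K ** mpow H (m - 1 - k))"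
    by (simp add: mmul_sum_right matrix_mul_assoc)
  finally have e: "(\<Sum>k<Suc m. mpow H k ** K ** mpow H (Suc m - 1 - k)) =
        K ** mpow H m + H ** (\<Sum>k<m. mpow H k ** K ** mpow H (m - 1 - k))" .
  show ?case
    unfolding dpow.simps Suc e mpow_cs by (simp add: cs_add mult.commute)
qed

definition beta :: "complex^'n^'n \<Rightarrow> complex^'n^'n \<Rightarrow> complex^'n^'n \<Rightarrow> nat \<Rightarrow> nat \<Rightarrow> complex" where
  "beta H K \<rho> p q = mtrace (K ** mpow H p ** \<rho> ** mpow H q)"

definition gam :: "complex^'n^'n \<Rightarrow> complex^'n^'n \<Rightarrow> complex^'n^'n \<Rightarrow> nat \<Rightarrow> complex" where
  "gam H K \<rho> m = (\<Sum>p\<le>m. beta H K \<rho> p (m - p))"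

lemma tr_dpow:
  fixes H K \<rho> :: "complex^'n^'n"
  shows "mtrace (dpow (cmat_scale a H) (cmat_scale a K) (Suc m) ** \<rho>) = a ^ Suc m * gam H K \<rho> m"
proof -
  have "mtrace (dpow (cmat_scale a H) (cmat_scale a K) (Suc m) ** \<rho>) =
        a ^ Suc m * (\<Sum>k<Suc m. mtrace (mpow H k ** K ** mpow H (m - k) ** \<rho>))"
    unfolding dpow_formula by (simp add: mmul_sum_left mtrace_sum del: sum.lessThan_Suc)
  also have "(\<Sum>k<Suc m. mtrace (mpow H k ** K ** mpow H (m - k) ** \<rho>)) = (\<Sum>k<Suc m. beta H K \<rho> (m - k) k)"
  proof (intro sum.cong refl)
    fix k
    have "mtrace (mpow H k ** K ** mpow H (m - k) ** \<rho>) = mtrace (mpow H k ** (K ** mpow H (m - k) ** \<rho>))"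
      by (simp add: matrix_mul_assoc)
    also have "\<dots> = mtrace (K ** mpow H (m - k) ** \<rho> ** mpow H k)"
      by (rule mtrace_comm)
    finally show "mtrace (mpow H k ** K ** mpow H (m - k) ** \<rho>) = beta H K \<rho> (m - k) k"
      by (simp add: beta_def)
  qed
  also have "\<dots> = gam H K \<rho> m"
  proof -
    have "(\<Sum>k<Suc m. beta H K \<rho> (m - k) k) = (\<Sum>k<Suc m. (\<lambda>p. beta H K \<rho> p (m - p)) (Suc m - Suc k))"
      by (intro sum.cong refl) auto
    also have "\<dots> = (\<Sum>p<Suc m. beta H K \<rho> p (m - p))"
      by (rule sum.nat_diff_reindex)
    finally show ?thesis unfolding gam_def by (simp add: lessThan_Suc_atMost)
  qed
  finally show ?thesis .
qed

lemma cnj_mtrace: "cnj (mtrace A) = mtrace (adjoint A)"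
  by (simp add: mtrace_def adjoint_def)

lemma adjoint_mmul: "adjoint ((A::complex^'n^'n) ** B) = adjoint B ** adjoint A"
  by (simp add: adjoint_def vec_eq_iff mmul_nth mult.commute)

lemma adjoint_mat1: "adjoint (mat 1 :: complex^'n^'n) = mat 1"
  by (simp add: adjoint_def vec_eq_iff mat_def)

lemma mpow_comm: "mpow A k ** A = A ** mpow A k"
  using mpow_Suc'[of A k] by simp

lemma adjoint_mpow: "hermitian H \<Longrightarrow> adjoint (mpow H k) = mpow H k"
  unfolding hermitian_def
  by (induction k) (auto simp: adjoint_mat1 adjoint_mmul mpow_comm)

lemma cnj_beta:
  assumes "hermitian H" "hermitian K" "hermitian \<rho>"
  shows "cnj (beta H K \<rho> p q) = beta H K \<rho> q p"
proof -
  have aK: "adjoint K = K" and a\<rho>: "adjoint \<rho> = \<rho>" using assms unfolding hermitian_def by auto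
  have "cnj (beta H K \<rho> p q) = mtrace (mpow H q ** \<rho> ** mpow H p ** K)"
    unfolding beta_def cnj_mtrace adjoint_mmul adjoint_mpow[OF assms(1)] aK a\<rho>
    by (simp add: matrix_mul_assoc)
  also have "\<dots> = mtrace (K ** (mpow H q ** \<rho> ** mpow H p))"
    by (rule mtrace_comm)
  finally show ?thesis by (simp add: beta_def matrix_mul_assoc)
qed

lemma gam_real:
  assumes "hermitian H" "hermitian K" "hermitian \<rho>"
  shows "gam H K \<rho> m = of_real (Re (gam H K \<rho> m))"
proof -
  have "cnj (gam H K \<rho> m) = (\<Sum>p<Suc m. beta H K \<rho> (m - p) p)"
    unfolding gam_def by (simp add: cnj_beta[OF assms] lessThan_Suc_atMost)
  also have "\<dots> = (\<Sum>p<Suc m. (\<lambda>k. beta H K \<rho> k (m - k)) (Suc m - Suc p))"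
    by (intro sum.cong refl) (auto simp: Suc_diff_le)
  also have "\<dots> = (\<Sum>p<Suc m. beta H K \<rho> p (m - p))" 
    by (rule sum.nat_diff_reindex)
  finally have c: "cnj (gam H K \<rho> m) = gam H K \<rho> m"
    by (simp add: gam_def lessThan_Suc_atMost)
  have "Im (gam H K \<rho> m) = 0" using arg_cong[OF c, of Im] by simp
  thus ?thesis by (simp add: complex_eq_iff)
qed

lemma hermitian_Hsum:
  assumes "\<And>k. hermitian (Hs k)"
  shows "hermitian (Hsum Hs \<theta>)"
proof -
  have h: "cnj (Hs k $ c $ r) = Hs k $ r $ c" for k r c
    using assms[of k] unfolding hermitian_def adjoint_def by (metis vec_lambda_beta)
  show ?thesis
    unfolding hermitian_def adjoint_def Hsum_def
    by (simp add: vec_eq_iff sum_component h)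
qed

lemma Hsum_upd:
  "Hsum Hs (vec_upd \<theta> j x) = Hsum Hs \<theta> + cmat_scale (of_real (x - \<theta> $ j)) (Hs j)"
proof -
  have e: "cmat_scale (of_real (vec_upd \<theta> j x $ k)) (Hs k) =
      cmat_scale (of_real (\<theta> $ k)) (Hs k) + (if k = j then cmat_scale (of_real (x - \<theta> $ j)) (Hs j) else 0)" for k
    by (simp add: vec_upd_def vec_eq_iff algebra_simps)
  show ?thesis unfolding Hsum_def e sum.distrib by simp
qed



lemma norm_mtrace: "norm (mtrace (X::complex^'n^'n)) \<le> real CARD('n) * norm X"
proof -
  have "norm (mtrace X) \<le> (\<Sum>i\<in>(UNIV::'n set). norm X)"
    unfolding mtrace_def by (rule order_trans[OF norm_sum]) (intro sum_mono norm_comp2_le)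
  thus ?thesis by simp
qed

lemma summable_norm_rho_mexp:
  "summable (\<lambda>q. norm ((\<rho>::complex^'n^'n) ** cmat_scale (v ^ q / fact q) (mpow H q)))"
proof (rule summable_comparison_test'[of "\<lambda>q. NN TYPE('n) * norm \<rho> * norm (cmat_scale (v ^ q / fact q) (mpow H q))"])
  show "summable (\<lambda>q. NN TYPE('n) * norm \<rho> * norm (cmat_scale (v ^ q / fact q) (mpow H q)))"
    by (intro summable_mult summable_norm_cs_mpow)
  show "norm (norm (\<rho> ** cmat_scale (v ^ q / fact q) (mpow H q))) \<le> NN TYPE('n) * norm \<rho> * norm (cmat_scale (v ^ q / fact q) (mpow H q))" for q
    using norm_mmul[of \<rho> "cmat_scale (v ^ q / fact q) (mpow H q)"] by simp
qed

lemma trace_series: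
  fixes H K \<rho> :: "complex^'n^'n"
  shows "(\<lambda>m. \<Sum>p\<le>m. u ^ p * v ^ (m - p) / (fact p * fact (m - p)) * beta H K \<rho> p (m - p))
          sums mtrace (K ** mexp (cmat_scale u H) ** \<rho> ** mexp (cmat_scale v H))"
proof -
  let ?a = "\<lambda>p. cmat_scale (u ^ p / fact p) (mpow H p)"
  let ?b = "\<lambda>q. \<rho> ** cmat_scale (v ^ q / fact q) (mpow H q)"
  have sb: "suminf ?b = \<rho> ** mexp (cmat_scale v H)"
    unfolding mexp_cs_def
    by (rule bounded_linear.suminf[OF mmul_bl_left, symmetric])
       (rule summable_norm_cancel[OF summable_norm_cs_mpow])
  have "(\<lambda>m. \<Sum>p\<le>m. ?a p ** ?b (m - p)) sums (suminf ?a ** suminf ?b)"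
    by (rule Cauchy_product_sums_bb[OF bb_mmul summable_norm_cs_mpow summable_norm_rho_mexp])
  hence "(\<lambda>m. mtrace (K ** (\<Sum>p\<le>m. ?a p ** ?b (m - p)))) sums mtrace (K ** (suminf ?a ** suminf ?b))"
    by (rule bounded_linear.sums[OF bounded_linear_compose[OF mtrace_bl mmul_bl_left]])
  moreover have "mtrace (K ** (suminf ?a ** suminf ?b)) = mtrace (K ** mexp (cmat_scale u H) ** \<rho> ** mexp (cmat_scale v H))"
    unfolding sb mexp_cs_def[symmetric] by (simp add: matrix_mul_assoc)
  moreover have "mtrace (K ** (\<Sum>p\<le>m. ?a p ** ?b (m - p))) =
      (\<Sum>p\<le>m. u ^ p * v ^ (m - p) / (fact p * fact (m - p)) * beta H K \<rho> p (m - p))" for m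
    unfolding mmul_sum_right mtrace_sum
    by (intro sum.cong refl) (simp add: beta_def matrix_mul_assoc mult_ac)
  ultimately show ?thesis by simp
qed

lemma Re_ofr_mult: "Re (complex_of_real r * z) = r * Re z"
  by simp

definition cc :: "real \<Rightarrow> complex^'n^'n \<Rightarrow> complex^'n^'n \<Rightarrow> complex^'n^'n \<Rightarrow> nat \<Rightarrow> nat \<Rightarrow> real" where
  "cc T H K \<rho> m p = (2 / T) ^ m * Re (\<i> ^ m * beta H K \<rho> p (m - p)) / (fact p * fact (m - p))"

definition gm :: "real \<Rightarrow> complex^'n^'n \<Rightarrow> complex^'n^'n \<Rightarrow> complex^'n^'n \<Rightarrow> nat \<Rightarrow> real \<times> real \<Rightarrow> real" where
  "gm T H K \<rho> m z = (\<Sum>p\<le>m. fst z ^ m * ((1 - snd z) ^ p * snd z ^ (m - p)) * cc T H K \<rho> m p)"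

definition FF :: "real \<Rightarrow> complex^'n^'n \<Rightarrow> complex^'n^'n \<Rightarrow> complex^'n^'n \<Rightarrow> real \<times> real \<Rightarrow> real" where
  "FF T H K \<rho> z = Re (mtrace (K ** mexp (cmat_scale (\<i> * of_real (2 * fst z / T)) H)
                                   ** Uevol H (2 * snd z * fst z / T) \<rho>))"

lemma FF_sums:
  fixes H K \<rho> :: "complex^'n^'n"
  shows "(\<lambda>m. gm T H K \<rho> m z) sums FF T H K \<rho> z"
proof -
  obtain t s where z: "z = (t, s)" by (cases z)
  define w where "w = 2 * t / T"
  define u where "u = \<i> * of_real w + (- \<i> * of_real (s * w))"
  define v where "v = \<i> * of_real (s * w)"
  have ts: "2 * s * t / T = s * w" unfolding w_def by simp
  define E1 where "E1 = mexp (cmat_scale (\<i> * of_real w) H)"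
  define E2 where "E2 = mexp (cmat_scale (- \<i> * of_real (s * w)) H)"
  have "FF T H K \<rho> z = Re (mtrace (K ** E1 ** (E2 ** \<rho> ** mexp (cmat_scale v H))))"
    unfolding FF_def z Uevol_def fst_conv snd_conv ts E1_def E2_def v_def w_def[symmetric] by simp
  also have "K ** E1 ** (E2 ** \<rho> ** mexp (cmat_scale v H)) = K ** (E1 ** E2) ** \<rho> ** mexp (cmat_scale v H)"
    by (simp only: matrix_mul_assoc)
  also have "E1 ** E2 = mexp (cmat_scale u H)"
    unfolding E1_def E2_def u_def by (rule mexp_add)
  finally have "FF T H K \<rho> z = Re (mtrace (K ** mexp (cmat_scale u H) ** \<rho> ** mexp (cmat_scale v H)))" .
  moreover have "(\<lambda>m. Re (\<Sum>p\<le>m. u ^ p * v ^ (m - p) / (fact p * fact (m - p)) * beta H K \<rho> p (m - p)))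
      sums Re (mtrace (K ** mexp (cmat_scale u H) ** \<rho> ** mexp (cmat_scale v H)))"
    by (rule sums_Re[OF trace_series])
  moreover have "Re (\<Sum>p\<le>m. u ^ p * v ^ (m - p) / (fact p * fact (m - p)) * beta H K \<rho> p (m - p)) = gm T H K \<rho> m z" for m
  proof -
    have uv: "u ^ p * v ^ (m - p) = of_real (w ^ m * ((1 - s) ^ p * s ^ (m - p))) * \<i> ^ m" if "p \<le> m" for p
    proof -
      have u': "u = \<i> * of_real (w * (1 - s))" unfolding u_def by (simp add: algebra_simps)
      have "u ^ p * v ^ (m - p) = \<i> ^ (p + (m - p)) * of_real (w ^ (p + (m - p)) * ((1 - s) ^ p * s ^ (m - p)))"
        unfolding u' v_def power_mult_distrib power_add by (simp add: mult_ac power_mult_distrib)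
      thus ?thesis using that by (simp add: mult_ac)
    qed
    show ?thesis
      unfolding gm_def cc_def z fst_conv snd_conv Re_sum
    proof (intro sum.cong refl)
      fix p assume "p \<in> {..m}"
      hence pm: "p \<le> m" by simp
      have "Re (u ^ p * v ^ (m - p) / (fact p * fact (m - p)) * beta H K \<rho> p (m - p))
          = Re (of_real (w ^ m * ((1 - s) ^ p * s ^ (m - p)) / (fact p * fact (m - p))) * (\<i> ^ m * beta H K \<rho> p (m - p)))"
        unfolding uv[OF pm] by (simp add: mult_ac)
      also have "\<dots> = w ^ m * ((1 - s) ^ p * s ^ (m - p)) / (fact p * fact (m - p)) * Re (\<i> ^ m * beta H K \<rho> p (m - p))"
        by (rule Re_ofr_mult)
      also have "\<dots> = t ^ m * ((1 - s) ^ p * s ^ (m - p)) * ((2 / T) ^ m * Re (\<i> ^ m * beta H K \<rho> p (m - p)) / (fact p * fact (m - p)))"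
        unfolding w_def by (simp add: power_mult_distrib power_divide field_simps)
      finally show "Re (u ^ p * v ^ (m - p) / (fact p * fact (m - p)) * beta H K \<rho> p (m - p)) =
         t ^ m * ((1 - s) ^ p * s ^ (m - p)) * ((2 / T) ^ m * Re (\<i> ^ m * beta H K \<rho> p (m - p)) / (fact p * fact (m - p)))" .
    qed
  qed
  ultimately show ?thesis by simp
qed



abbreviation "NM \<equiv> density lborel std_normal_density"
abbreviation "UM \<equiv> uniform_measure lborel {0..1::real}"

lemma emeasure_01: "emeasure lborel {0..1::real} = 1"
  by (subst emeasure_lborel_Icc) auto

lemma prob_M1: "prob_space NM"
  by (rule prob_space_normal_density) simp

lemma prob_M2: "prob_space UM"
  by (rule prob_space_uniform_measure) (simp_all add: emeasure_01)

lemma psf: "pair_sigma_finite NM UM"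
  by (intro pair_sigma_finite.intro prob_space_imp_sigma_finite prob_M1 prob_M2)

lemma sets_M12: "sets (NM \<Otimes>\<^sub>M UM) = sets (borel \<Otimes>\<^sub>M borel)"
  by (rule sets_pair_measure_cong) (simp_all add: uniform_measure_def)

lemma meas_M12: "f \<in> borel_measurable (borel \<Otimes>\<^sub>M borel) \<Longrightarrow> f \<in> borel_measurable (NM \<Otimes>\<^sub>M UM)"
  using measurable_cong_sets[OF sets_M12 refl] by blast

lemma M2_density: "UM = density lborel (\<lambda>x. ennreal (indicator {0..1::real} x))"
  unfolding uniform_measure_def emeasure_01 by (simp add: ennreal_indicator divide_ennreal_def)

lemma (in pair_sigma_finite) prod_integrable:
  fixes f g :: "_ \<Rightarrow> real"
  assumes f: "integrable M1 f" and g: "integrable M2 g"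
  shows "integrable (M1 \<Otimes>\<^sub>M M2) (\<lambda>z. f (fst z) * g (snd z))"
    and "integral\<^sup>L (M1 \<Otimes>\<^sub>M M2) (\<lambda>z. f (fst z) * g (snd z)) = integral\<^sup>L M1 f * integral\<^sup>L M2 g"
proof -
  have [measurable]: "f \<in> borel_measurable M1" "g \<in> borel_measurable M2"
    using f g by auto
  show i: "integrable (M1 \<Otimes>\<^sub>M M2) (\<lambda>z. f (fst z) * g (snd z))"
  proof (rule Fubini_integrable)
    show "(\<lambda>z. f (fst z) * g (snd z)) \<in> borel_measurable (M1 \<Otimes>\<^sub>M M2)" by measurable
    have "integrable M1 (\<lambda>x. norm (f x) * (\<integral>y. norm (g y) \<partial>M2))"
      using f by (intro integrable_mult_left) auto
    thus "integrable M1 (\<lambda>x. \<integral>y. norm (f (fst (x, y)) * g (snd (x, y))) \<partial>M2)"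
      by (simp add: abs_mult)
    show "AE x in M1. integrable M2 (\<lambda>y. f (fst (x, y)) * g (snd (x, y)))"
      using g by (auto intro!: integrable_mult_right)
  qed
  have "integral\<^sup>L (M1 \<Otimes>\<^sub>M M2) (\<lambda>z. f (fst z) * g (snd z)) = (\<integral>x. (\<integral>y. f x * g y \<partial>M2) \<partial>M1)"
    using integral_fst'[OF i] by simp
  also have "\<dots> = (\<integral>x. f x * integral\<^sup>L M2 g \<partial>M1)"
    by simp
  also have "\<dots> = integral\<^sup>L M1 f * integral\<^sup>L M2 g"
    by simp
  finally show "integral\<^sup>L (M1 \<Otimes>\<^sub>M M2) (\<lambda>z. f (fst z) * g (snd z)) = integral\<^sup>L M1 f * integral\<^sup>L M2 g" .
qed

lemma integrable_M1_pow: "integrable NM (\<lambda>t. t ^ m)"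
  by (subst integrable_density) (auto intro!: integrable_std_normal_moment)

lemma integral_M1_pow: "integral\<^sup>L NM (\<lambda>t. t ^ m) = integral\<^sup>L lborel (\<lambda>t. std_normal_density t * t ^ m)"
  by (subst integral_density) auto

lemma integral_M1_even: "integral\<^sup>L NM (\<lambda>t. t ^ (2 * k)) = fact (2 * k) / (2 ^ k * fact k)"
  unfolding integral_M1_pow by (rule integral_std_normal_moment_even)

lemma integral_M1_odd: "integral\<^sup>L NM (\<lambda>t. t ^ (2 * k + 1)) = 0"
  unfolding integral_M1_pow by (rule integral_std_normal_moment_odd)

lemma beta_int: "((\<lambda>s. (1 - s) ^ p * s ^ q) has_integral (fact p * fact q / fact (p + q + 1))) {0..1::real}"
proof -
  have "((\<lambda>t. t powr (real q + 1 - 1) * (1 - t) powr (real p + 1 - 1)) has_integral Beta (real q + 1) (real p + 1)) {0..1}"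
    by (rule has_integral_Beta_real) auto
  moreover have "Beta (real q + 1) (real p + 1) = fact p * fact q / fact (p + q + 1)"
  proof -
    have g1: "Gamma (real q + 1) = fact q" using Gamma_fact[of q] by (simp add: add.commute)
    have g2: "Gamma (real p + 1) = fact p" using Gamma_fact[of p] by (simp add: add.commute)
    have g3: "Gamma (real q + 1 + (real p + 1)) = fact (p + q + 1)"
      using Gamma_fact[of "p + q + 1"] by (simp add: add_ac)
    show ?thesis unfolding Beta_def g1 g2 g3 by simp
  qed
  ultimately have hi: "((\<lambda>t. t powr (real q) * (1 - t) powr (real p)) has_integral (fact p * fact q / fact (p + q + 1))) {0..1}"
    by simp
  have eq: "(1 - x) ^ p * x ^ q = x powr real q * (1 - x) powr real p" if "x \<in> {0..1::real} - {0, 1}" for x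
  proof -
    from that have "0 < x" "x < 1" by auto
    thus ?thesis by (simp add: powr_realpow)
  qed
  show ?thesis
    by (rule has_integral_spike_finite[of "{0, 1}", OF _ eq hi]) simp_all
qed

lemma integrable_M2_poly: "integrable UM (\<lambda>s. (1 - s) ^ p * s ^ q)"
proof -
  have "integrable lborel (\<lambda>s. indicator {0..1::real} s *\<^sub>R ((1 - s) ^ p * s ^ q))"
    by (rule borel_integrable_compact) (auto intro!: continuous_intros)
  thus ?thesis unfolding M2_density by (subst integrable_density) auto
qed

lemma integral_M2_poly: "integral\<^sup>L UM (\<lambda>s. (1 - s) ^ p * s ^ q) = fact p * fact q / fact (p + q + 1)"
proof -
  have si: "set_integrable lborel {0..1::real} (\<lambda>s. (1 - s) ^ p * s ^ q)"
    unfolding set_integrable_def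
    by (rule borel_integrable_compact) (auto intro!: continuous_intros)
  have "integral\<^sup>L UM (\<lambda>s. (1 - s) ^ p * s ^ q) = set_lebesgue_integral lborel {0..1} (\<lambda>s. (1 - s) ^ p * s ^ q)"
    unfolding M2_density set_lebesgue_integral_def by (subst integral_density) auto
  also have "\<dots> = integral {0..1} (\<lambda>s. (1 - s) ^ p * s ^ q)"
    by (rule set_borel_integral_eq_integral(2)[OF si])
  also have "\<dots> = fact p * fact q / fact (p + q + 1)"
    by (rule integral_unique[OF beta_int])
  finally show ?thesis .
qed



lemma exp_abs_integrable: "integrable NM (\<lambda>t. exp (c * \<bar>t\<bar>))"
proof -
  have nd: "normal_density 0 (sqrt 2) x = 1 / sqrt (4 * pi) * exp (- x\<^sup>2 / 4)" for x
    unfolding normal_density_def by simp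
  have "integrable lborel (\<lambda>x. exp (c\<^sup>2) * sqrt 2 * normal_density 0 (sqrt 2) x)"
    by (intro integrable_mult_right integrable_normal_density) simp
  hence "integrable lborel (\<lambda>x. std_normal_density x *\<^sub>R exp (c * \<bar>x\<bar>))"
  proof (rule Bochner_Integration.integrable_bound)
    show "(\<lambda>x. std_normal_density x *\<^sub>R exp (c * \<bar>x\<bar>)) \<in> borel_measurable lborel"
      by measurable
    show "AE x in lborel. norm (std_normal_density x *\<^sub>R exp (c * \<bar>x\<bar>))
            \<le> norm (exp (c\<^sup>2) * sqrt 2 * normal_density 0 (sqrt 2) x)"
    proof (rule AE_I2)
      fix x :: real
      have sq: "0 \<le> (\<bar>x\<bar> / 2 - c)\<^sup>2" by simp
      have xx: "x\<^sup>2 = \<bar>x\<bar>\<^sup>2" by simp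
      have ineq: "- x\<^sup>2 / 2 + c * \<bar>x\<bar> \<le> c\<^sup>2 + - x\<^sup>2 / 4"
        using sq unfolding xx by (simp add: power2_eq_square algebra_simps)
      have e1: "exp (- x\<^sup>2 / 2) * exp (c * \<bar>x\<bar>) \<le> exp (c\<^sup>2) * exp (- x\<^sup>2 / 4)"
        using ineq by (simp add: exp_add[symmetric])
      have s2: "sqrt 2 * (1 / sqrt (4 * pi)) = 1 / sqrt (2 * pi)"
      proof -
        have "sqrt (4 * pi) = sqrt 2 * sqrt (2 * pi)" by (simp add: real_sqrt_mult[symmetric])
        thus ?thesis by simp
      qed
      have A: "std_normal_density x *\<^sub>R exp (c * \<bar>x\<bar>) = (1 / sqrt (2 * pi)) * (exp (- x\<^sup>2 / 2) * exp (c * \<bar>x\<bar>))"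
        by (simp add: std_normal_density_def)
      have B: "exp (c\<^sup>2) * sqrt 2 * normal_density 0 (sqrt 2) x = (1 / sqrt (2 * pi)) * (exp (c\<^sup>2) * exp (- x\<^sup>2 / 4))"
        unfolding nd s2[symmetric] by (simp only: mult_ac)
      have le: "(1 / sqrt (2 * pi)) * (exp (- x\<^sup>2 / 2) * exp (c * \<bar>x\<bar>)) \<le> (1 / sqrt (2 * pi)) * (exp (c\<^sup>2) * exp (- x\<^sup>2 / 4))"
        by (rule mult_left_mono[OF e1]) simp
      have p1: "0 \<le> (1 / sqrt (2 * pi)) * (exp (- x\<^sup>2 / 2) * exp (c * \<bar>x\<bar>))" by simp
      have p2: "0 \<le> (1 / sqrt (2 * pi)) * (exp (c\<^sup>2) * exp (- x\<^sup>2 / 4))" by simp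
      show "norm (std_normal_density x *\<^sub>R exp (c * \<bar>x\<bar>))
            \<le> norm (exp (c\<^sup>2) * sqrt 2 * normal_density 0 (sqrt 2) x)"
        unfolding A B real_norm_def abs_of_nonneg[OF p1] abs_of_nonneg[OF p2] by (rule le)
    qed
  qed
  thus ?thesis by (subst integrable_density) auto
qed



definition Bb :: "complex^('n::finite)^'n \<Rightarrow> complex^'n^'n \<Rightarrow> real" where
  "Bb K \<rho> = real CARD('n) * NN TYPE('n) ^ 3 * norm K * norm \<rho> * norm (mat 1 :: complex^'n^'n) ^ 2"

lemma Bb_nonneg: "Bb (K::complex^'n^'n) \<rho> \<ge> 0"
  unfolding Bb_def using NN_ge1[where 'n='n] by simp

lemma norm_beta:
  fixes H K \<rho> :: "complex^'n^'n"
  shows "norm (beta H K \<rho> p q) \<le> Bb K \<rho> * (NN TYPE('n) * norm H) ^ (p + q)"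
proof -
  let ?N = "NN TYPE('n)" and ?c = "norm (mat 1 :: complex^'n^'n)" and ?R = "NN TYPE('n) * norm H"
  have N0: "?N \<ge> 0" using NN_ge1[where 'n='n] by simp
  have R0: "?R \<ge> 0" using N0 by simp
  have n1: "norm (K ** mpow H p) \<le> ?N * norm K * norm (mpow H p)" by (rule norm_mmul)
  have n2: "norm (K ** mpow H p ** \<rho>) \<le> ?N * (?N * norm K * norm (mpow H p)) * norm \<rho>"
    by (rule order_trans[OF norm_mmul]) (intro mult_right_mono mult_left_mono n1 N0 norm_ge_zero)
  have n3: "norm (K ** mpow H p ** \<rho> ** mpow H q) \<le> ?N * (?N * (?N * norm K * norm (mpow H p)) * norm \<rho>) * norm (mpow H q)"
    by (rule order_trans[OF norm_mmul]) (intro mult_right_mono mult_left_mono n2 N0 norm_ge_zero)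
  have pq: "norm (mpow H p) * norm (mpow H q) \<le> (?c * ?R ^ p) * (?c * ?R ^ q)"
    by (intro mult_mono norm_mpow) (use R0 in auto)
  have "norm (beta H K \<rho> p q) \<le> real CARD('n) * norm (K ** mpow H p ** \<rho> ** mpow H q)"
    unfolding beta_def by (rule norm_mtrace)
  also have "\<dots> \<le> real CARD('n) * (?N * (?N * (?N * norm K * norm (mpow H p)) * norm \<rho>) * norm (mpow H q))"
    by (intro mult_left_mono n3) auto
  also have "\<dots> = (real CARD('n) * ?N ^ 3 * norm K * norm \<rho>) * (norm (mpow H p) * norm (mpow H q))"
    by (simp add: power3_eq_cube mult_ac)
  also have "\<dots> \<le> (real CARD('n) * ?N ^ 3 * norm K * norm \<rho>) * ((?c * ?R ^ p) * (?c * ?R ^ q))"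
    by (intro mult_left_mono pq) (use N0 in auto)
  also have "\<dots> = Bb K \<rho> * ?R ^ (p + q)"
    unfolding Bb_def by (simp add: power_add power2_eq_square mult_ac)
  finally show ?thesis .
qed

lemma binom_inv_fact:
  "(\<Sum>p\<le>m. (1 - s) ^ p * s ^ (m - p) / (fact p * fact (m - p))) = 1 / (fact m :: real)"
proof -
  have "1 = ((1 - s) + s) ^ m" by simp
  also have "\<dots> = (\<Sum>p\<le>m. of_nat (m choose p) * (1 - s) ^ p * s ^ (m - p))"
    by (rule binomial_ring)
  finally have one: "(\<Sum>p\<le>m. of_nat (m choose p) * (1 - s) ^ p * s ^ (m - p)) = 1" by simp
  have "(\<Sum>p\<le>m. (1 - s) ^ p * s ^ (m - p) / (fact p * fact (m - p))) =
        (\<Sum>p\<le>m. of_nat (m choose p) * (1 - s) ^ p * s ^ (m - p)) / fact m"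
    unfolding sum_divide_distrib
  proof (intro sum.cong refl)
    fix p assume "p \<in> {..m}"
    hence pm: "p \<le> m" by simp
    have fm: "(fact m :: real) = of_nat (m choose p) * (fact p * fact (m-p))"
      using binomial_fact_lemma[OF pm] by (metis of_nat_fact of_nat_mult mult.commute)
    have nz: "(of_nat (m choose p) :: real) \<noteq> 0" using pm by simp
    show "(1 - s) ^ p * s ^ (m - p) / (fact p * fact (m - p)) = of_nat (m choose p) * (1 - s) ^ p * s ^ (m - p) / fact m"
      unfolding fm using nz by simp
  qed
  also have "\<dots> = 1 / fact m" unfolding one ..
  finally show ?thesis .
qed

lemma gm_bound:
  fixes H K \<rho> :: "complex^'n^'n"
  assumes T: "T > 0" and s: "s \<in> {0..1}"
  shows "\<bar>gm T H K \<rho> m (t, s)\<bar> \<le> Bb K \<rho> * (2 * \<bar>t\<bar> * (NN TYPE('n) * norm H) / T) ^ m / fact m"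
proof -
  let ?R = "NN TYPE('n) * norm H"
  have s0: "0 \<le> s" "s \<le> 1" using s by auto
  have "\<bar>gm T H K \<rho> m (t, s)\<bar> \<le> (\<Sum>p\<le>m. \<bar>t ^ m * ((1 - s) ^ p * s ^ (m - p)) * cc T H K \<rho> m p\<bar>)"
    unfolding gm_def fst_conv snd_conv by (rule sum_abs)
  also have "\<dots> \<le> (\<Sum>p\<le>m. (Bb K \<rho> * (2 * \<bar>t\<bar> * ?R / T) ^ m) * ((1 - s) ^ p * s ^ (m - p) / (fact p * fact (m - p))))"
  proof (intro sum_mono)
    fix p assume "p \<in> {..m}"
    hence pm: "p \<le> m" by simp
    have ps: "0 \<le> (1 - s) ^ p * s ^ (m - p)" using s0 by simp
    have "\<bar>cc T H K \<rho> m p\<bar> \<le> (2 / T) ^ m * norm (beta H K \<rho> p (m - p)) / (fact p * fact (m - p))"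
    proof -
      have "\<bar>Re (\<i> ^ m * beta H K \<rho> p (m - p))\<bar> \<le> norm (beta H K \<rho> p (m - p))"
        using abs_Re_le_cmod[of "\<i> ^ m * beta H K \<rho> p (m - p)"] by (simp add: norm_mult norm_power)
      thus ?thesis unfolding cc_def using T
        by (simp add: abs_mult abs_divide divide_right_mono mult_left_mono)
    qed
    also have "\<dots> \<le> (2 / T) ^ m * (Bb K \<rho> * ?R ^ m) / (fact p * fact (m - p))"
      using norm_beta[of H K \<rho> p "m - p"] pm T
      by (intro divide_right_mono mult_left_mono) auto
    finally have cb: "\<bar>cc T H K \<rho> m p\<bar> \<le> (2 / T) ^ m * (Bb K \<rho> * ?R ^ m) / (fact p * fact (m - p))" .
    have "\<bar>t ^ m * ((1 - s) ^ p * s ^ (m - p)) * cc T H K \<rho> m p\<bar> = \<bar>t\<bar> ^ m * ((1 - s) ^ p * s ^ (m - p)) * \<bar>cc T H K \<rho> m p\<bar>"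
    proof -
      have a1: "\<bar>1 - s\<bar> = 1 - s" and a2: "\<bar>s\<bar> = s" using s0 by auto
      show ?thesis by (simp add: abs_mult power_abs a1 a2)
    qed
    also have "\<dots> \<le> \<bar>t\<bar> ^ m * ((1 - s) ^ p * s ^ (m - p)) * ((2 / T) ^ m * (Bb K \<rho> * ?R ^ m) / (fact p * fact (m - p)))"
      using ps by (intro mult_left_mono cb) auto
    also have "\<dots> = (Bb K \<rho> * (2 * \<bar>t\<bar> * ?R / T) ^ m) * ((1 - s) ^ p * s ^ (m - p) / (fact p * fact (m - p)))"
      by (simp add: power_mult_distrib power_divide mult_ac)
    finally show "\<bar>t ^ m * ((1 - s) ^ p * s ^ (m - p)) * cc T H K \<rho> m p\<bar> \<le> (Bb K \<rho> * (2 * \<bar>t\<bar> * ?R / T) ^ m) * ((1 - s) ^ p * s ^ (m - p) / (fact p * fact (m - p)))" .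
  qed
  also have "\<dots> = Bb K \<rho> * (2 * \<bar>t\<bar> * ?R / T) ^ m / fact m"
    unfolding sum_distrib_left[symmetric] binom_inv_fact by simp
  finally show ?thesis .
qed

lemma partial_exp_le: "(x::real) \<ge> 0 \<Longrightarrow> (\<Sum>m<N. x ^ m / fact m) \<le> exp x"
proof -
  assume x: "x \<ge> 0"
  have "(\<Sum>m<N. x ^ m /\<^sub>R fact m) \<le> (\<Sum>m. x ^ m /\<^sub>R fact m)"
    by (rule sum_le_suminf[OF summable_exp_generic]) (use x in auto)
  thus ?thesis by (simp add: exp_def divide_inverse_commute mult.commute)
qed



definition Em :: "nat \<Rightarrow> real" where "Em m = integral\<^sup>L NM (\<lambda>t. t ^ m)"

lemma gm_split: "gm T H K \<rho> m = (\<lambda>z. \<Sum>p\<le>m. (\<lambda>t. t ^ m) (fst z) * (\<lambda>s. (1 - s) ^ p * s ^ (m - p)) (snd z) * cc T H K \<rho> m p)"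
  by (simp add: gm_def fun_eq_iff)

lemma int_gm:
  fixes H K \<rho> :: "complex^'n^'n"
  shows "integrable (NM \<Otimes>\<^sub>M UM) (gm T H K \<rho> m)"
    and "integral\<^sup>L (NM \<Otimes>\<^sub>M UM) (gm T H K \<rho> m) = Em m * (2 / T) ^ m / fact (m + 1) * Re (\<i> ^ m * gam H K \<rho> m)"
proof -
  interpret p: pair_sigma_finite NM UM by (rule psf)
  have pi: "integrable (NM \<Otimes>\<^sub>M UM) (\<lambda>z. (\<lambda>t. t ^ m) (fst z) * (\<lambda>s. (1 - s) ^ p * s ^ (m - p)) (snd z))" for p
    by (rule p.prod_integrable(1)[OF integrable_M1_pow integrable_M2_poly])
  show "integrable (NM \<Otimes>\<^sub>M UM) (gm T H K \<rho> m)"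
    unfolding gm_split by (intro Bochner_Integration.integrable_sum integrable_mult_left pi)
  have "integral\<^sup>L (NM \<Otimes>\<^sub>M UM) (gm T H K \<rho> m) =
        (\<Sum>p\<le>m. integral\<^sup>L (NM \<Otimes>\<^sub>M UM) (\<lambda>z. (\<lambda>t. t ^ m) (fst z) * (\<lambda>s. (1 - s) ^ p * s ^ (m - p)) (snd z)) * cc T H K \<rho> m p)"
    unfolding gm_split by (subst Bochner_Integration.integral_sum) (auto intro!: integrable_mult_left pi)
  also have "\<dots> = (\<Sum>p\<le>m. Em m * (fact p * fact (m - p) / fact (m + 1)) * cc T H K \<rho> m p)"
  proof (intro sum.cong refl)
    fix p assume "p \<in> {..m}"
    hence pm: "p \<le> m" by simp
    show "integral\<^sup>L (NM \<Otimes>\<^sub>M UM) (\<lambda>z. (\<lambda>t. t ^ m) (fst z) * (\<lambda>s. (1 - s) ^ p * s ^ (m - p)) (snd z)) * cc T H K \<rho> m p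
        = Em m * (fact p * fact (m - p) / fact (m + 1)) * cc T H K \<rho> m p"
      unfolding p.prod_integrable(2)[OF integrable_M1_pow integrable_M2_poly] integral_M2_poly Em_def
      using pm by simp
  qed
  also have "\<dots> = (\<Sum>p\<le>m. Em m * (2 / T) ^ m / fact (m + 1) * Re (\<i> ^ m * beta H K \<rho> p (m - p)))"
    by (intro sum.cong refl) (simp add: cc_def)
  also have "\<dots> = Em m * (2 / T) ^ m / fact (m + 1) * Re (\<i> ^ m * gam H K \<rho> m)"
    unfolding gam_def sum_distrib_left[symmetric] Re_sum[symmetric] ..
  finally show "integral\<^sup>L (NM \<Otimes>\<^sub>M UM) (gm T H K \<rho> m) = Em m * (2 / T) ^ m / fact (m + 1) * Re (\<i> ^ m * gam H K \<rho> m)" .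
qed

definition tk :: "real \<Rightarrow> complex^'n^'n \<Rightarrow> complex^'n^'n \<Rightarrow> complex^'n^'n \<Rightarrow> nat \<Rightarrow> real" where
  "tk T H K \<rho> k = (-1) ^ k * (2 / T\<^sup>2) ^ k / (fact k * (2 * real k + 1)) * Re (gam H K \<rho> (2 * k))"

lemma int_gm_odd:
  fixes H K \<rho> :: "complex^'n^'n"
  shows "integral\<^sup>L (NM \<Otimes>\<^sub>M UM) (gm T H K \<rho> (2 * k + 1)) = 0"
  unfolding int_gm(2) Em_def integral_M1_odd by simp

lemma aux_frac: "(F::real) \<noteq> 0 \<Longrightarrow> A \<noteq> 0 \<Longrightarrow> B \<noteq> 0 \<Longrightarrow> C \<noteq> 0 \<Longrightarrow> F / (A * B) * (A * q) / (C * F) = q / (B * C)"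
  by (simp add: field_simps)

lemma int_gm_even:
  fixes H K \<rho> :: "complex^'n^'n"
  assumes T: "T > 0"
  shows "integral\<^sup>L (NM \<Otimes>\<^sub>M UM) (gm T H K \<rho> (2 * k)) = tk T H K \<rho> k"
proof -
  have i: "\<i> ^ (2 * k) = (-1) ^ k" by (simp add: power_mult)
  have f: "fact (2 * k + 1) = (2 * real k + 1) * (fact (2 * k) :: real)"
    by (simp add: fact_Suc)
  have t: "(2 / T) ^ (2 * k) = 2 ^ k * (2 / T\<^sup>2) ^ k"
    by (simp add: power_mult power_mult_distrib[symmetric] power2_eq_square)
  have R: "Re (\<i> ^ (2 * k) * gam H K \<rho> (2 * k)) = (-1) ^ k * Re (gam H K \<rho> (2 * k))"
    unfolding i by (cases "even k") auto
  have E: "Em (2 * k) = fact (2 * k) / (2 ^ k * fact k)"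
    unfolding Em_def by (rule integral_M1_even)
  have c: "fact (2 * k) / (2 ^ k * fact k) * (2 ^ k * (2 / T\<^sup>2) ^ k) / ((2 * real k + 1) * fact (2 * k))
      = (2 / T\<^sup>2) ^ k / (fact k * (2 * real k + 1))"
    by (rule aux_frac) auto
  show ?thesis
    unfolding int_gm(2) tk_def f t E R c by (simp add: divide_inverse mult_ac)
qed



lemma rhs_sums:
  fixes H K \<rho> :: "complex^'n^'n"
  assumes T: "T > 0"
  shows "(\<lambda>k. tk T H K \<rho> k) sums integral\<^sup>L (NM \<Otimes>\<^sub>M UM) (FF T H K \<rho>)"
proof -
  interpret p: pair_sigma_finite NM UM by (rule psf)
  interpret u: prob_space UM by (rule prob_M2)
  define S where "S N z = (\<Sum>m<N. gm T H K \<rho> m z)" for N z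
  define c0 where "c0 = 2 * (NN TYPE('n) * norm H) / T"
  define w where "w z = Bb K \<rho> * exp (c0 * \<bar>fst z\<bar>)" for z :: "real \<times> real"
  have c00: "c0 \<ge> 0" unfolding c0_def using T NN_ge1[where 'n='n] by simp
  have mgm: "gm T H K \<rho> m \<in> borel_measurable (NM \<Otimes>\<^sub>M UM)" for m
    unfolding gm_def by (rule meas_M12) measurable
  have mS: "S N \<in> borel_measurable (NM \<Otimes>\<^sub>M UM)" for N
    unfolding S_def by (rule borel_measurable_sum) (rule mgm)
  have lim: "(\<lambda>N. S N z) \<longlonglongrightarrow> FF T H K \<rho> z" for z
    using FF_sums[of T H K \<rho> z] unfolding sums_def S_def .
  have mF: "FF T H K \<rho> \<in> borel_measurable (NM \<Otimes>\<^sub>M UM)"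
    by (rule borel_measurable_LIMSEQ_metric[OF mS lim])
  have iw: "integrable (NM \<Otimes>\<^sub>M UM) w"
  proof -
    have "integrable (NM \<Otimes>\<^sub>M UM) (\<lambda>z. (\<lambda>t. Bb K \<rho> * exp (c0 * \<bar>t\<bar>)) (fst z) * (\<lambda>s. 1) (snd z))"
      by (rule p.prod_integrable(1)) (auto intro: integrable_mult_right exp_abs_integrable)
    thus ?thesis unfolding w_def by simp
  qed
  have ae01: "AE z in NM \<Otimes>\<^sub>M UM. snd z \<in> {0..1}"
  proof (rule p.AE_pair_measure)
    show "{x \<in> space (NM \<Otimes>\<^sub>M UM). snd x \<in> {0..1}} \<in> sets (NM \<Otimes>\<^sub>M UM)"
      by measurable
    show "AE x in NM. AE y in UM. snd (x, y) \<in> {0..1}"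
      by (intro AE_I2 AE_uniform_measureI) auto
  qed
  have bound: "AE z in NM \<Otimes>\<^sub>M UM. norm (S N z) \<le> w z" for N
    using ae01
  proof eventually_elim
    fix z :: "real \<times> real" assume z: "snd z \<in> {0..1}"
    obtain t s where zz: "z = (t, s)" by (cases z)
    have s: "s \<in> {0..1}" using z zz by simp
    have "norm (S N z) \<le> (\<Sum>m<N. \<bar>gm T H K \<rho> m (t, s)\<bar>)"
      unfolding S_def zz real_norm_def by (rule sum_abs)
    also have "\<dots> \<le> (\<Sum>m<N. Bb K \<rho> * ((c0 * \<bar>t\<bar>) ^ m / fact m))"
    proof (intro sum_mono)
      fix m
      have "\<bar>gm T H K \<rho> m (t, s)\<bar> \<le> Bb K \<rho> * (2 * \<bar>t\<bar> * (NN TYPE('n) * norm H) / T) ^ m / fact m"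
        by (rule gm_bound[OF T s])
      also have "2 * \<bar>t\<bar> * (NN TYPE('n) * norm H) / T = c0 * \<bar>t\<bar>"
        unfolding c0_def by simp
      finally show "\<bar>gm T H K \<rho> m (t, s)\<bar> \<le> Bb K \<rho> * ((c0 * \<bar>t\<bar>) ^ m / fact m)" by simp
    qed
    also have "\<dots> = Bb K \<rho> * (\<Sum>m<N. (c0 * \<bar>t\<bar>) ^ m / fact m)"
      by (simp add: sum_distrib_left)
    also have "\<dots> \<le> Bb K \<rho> * exp (c0 * \<bar>t\<bar>)"
      by (intro mult_left_mono partial_exp_le Bb_nonneg) (use c00 in simp)
    also have "\<dots> = w z" unfolding w_def zz by simp
    finally show "norm (S N z) \<le> w z" .
  qed
  have "(\<lambda>N. integral\<^sup>L (NM \<Otimes>\<^sub>M UM) (S N)) \<longlonglongrightarrow> integral\<^sup>L (NM \<Otimes>\<^sub>M UM) (FF T H K \<rho>)"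
    by (rule integral_dominated_convergence[OF mF mS iw _ bound]) (simp add: lim)
  moreover have "integral\<^sup>L (NM \<Otimes>\<^sub>M UM) (S N) = (\<Sum>m<N. integral\<^sup>L (NM \<Otimes>\<^sub>M UM) (gm T H K \<rho> m))" for N
    unfolding S_def by (rule Bochner_Integration.integral_sum) (rule int_gm(1))
  ultimately have sm: "(\<lambda>m. integral\<^sup>L (NM \<Otimes>\<^sub>M UM) (gm T H K \<rho> m)) sums integral\<^sup>L (NM \<Otimes>\<^sub>M UM) (FF T H K \<rho>)"
    unfolding sums_def by simp
  have "(\<lambda>k. integral\<^sup>L (NM \<Otimes>\<^sub>M UM) (gm T H K \<rho> (2 * k))) sums integral\<^sup>L (NM \<Otimes>\<^sub>M UM) (FF T H K \<rho>)"
  proof (subst sums_mono_reindex)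
    show "strict_mono (\<lambda>k::nat. 2 * k)" by (rule strict_monoI) simp
    show "integral\<^sup>L (NM \<Otimes>\<^sub>M UM) (gm T H K \<rho> n) = 0" if "n \<notin> range (\<lambda>k::nat. 2 * k)" for n
    proof -
      have "odd n" using that by (metis evenE rangeI)
      then obtain k where "n = 2 * k + 1" by (rule oddE)
      thus ?thesis using int_gm_odd[of T H K \<rho> k] by simp
    qed
  qed (rule sm)
  thus ?thesis by (simp add: int_gm_even[OF T])
qed



lemma coef_identity:
  assumes T: "T > 0"
  shows "kap n * complex_of_real (sqrt 2 / T) ^ (2 * n + 1) =
         complex_of_real (2 / T * sqrt (2 / pi) * ((-1) ^ n * (2 / T\<^sup>2) ^ n / (fact n * (2 * real n + 1))))"
proof -
  have a: "(sqrt 2 / T) ^ (2 * n + 1) = sqrt 2 / T * (2 / T\<^sup>2) ^ n"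
  proof -
    have "(sqrt 2 / T) ^ (2 * n + 1) = sqrt 2 / T * ((sqrt 2 / T)\<^sup>2) ^ n"
      by (simp add: power_mult)
    also have "(sqrt 2 / T)\<^sup>2 = 2 / T\<^sup>2" by (simp add: power_divide)
    finally show ?thesis .
  qed
  have b: "2 / sqrt pi * (sqrt 2 / T) = 2 / T * sqrt (2 / pi)"
    by (simp add: real_sqrt_divide)
  have "kap n * complex_of_real (sqrt 2 / T) ^ (2 * n + 1) =
        complex_of_real (2 / sqrt pi * ((-1) ^ n / (fact n * (2 * real n + 1))) * (sqrt 2 / T * (2 / T\<^sup>2) ^ n))"
    unfolding kap_def of_real_power[symmetric] a of_real_mult ..
  also have "2 / sqrt pi * ((-1) ^ n / (fact n * (2 * real n + 1))) * (sqrt 2 / T * (2 / T\<^sup>2) ^ n)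
      = (2 / sqrt pi * (sqrt 2 / T)) * ((-1) ^ n * (2 / T\<^sup>2) ^ n / (fact n * (2 * real n + 1)))"
    by (simp add: mult_ac)
  also note b
  finally show ?thesis .
qed

theorem mainTheorem14:
  fixes T :: real and \<rho> :: "complex^'n^'n" and Hs :: "'J::finite \<Rightarrow> complex^'n^'n"
    and \<theta> :: "real^'J" and j :: 'J
  assumes "T > 0" and "density_operator \<rho>" and "\<And>k. hermitian (Hs k)"
  shows "((\<lambda>x. mtrace (merf (cmat_scale (of_real (sqrt 2 / T)) (Hsum Hs (vec_upd \<theta> j x))) ** \<rho>))
          has_vector_derivative
          of_real (2 / T * sqrt (2 / pi) *
            integral\<^sup>L (density lborel std_normal_density \<Otimes>\<^sub>M uniform_measure lborel {0..1})
              (\<lambda>(t, s). Re (mtrace (Hs j ** mexp (cmat_scale (\<i> * of_real (2 * t / T)) (Hsum Hs \<theta>))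
                                   ** Uevol (Hsum Hs \<theta>) (2 * s * t / T) \<rho>)))))
         (at (\<theta> $ j))"
proof -
  note T = assms(1)
  define H where "H = Hsum Hs \<theta>"
  define K where "K = Hs j"
  define a where "a = complex_of_real (sqrt 2 / T)"
  have hH: "hermitian H" unfolding H_def by (rule hermitian_Hsum[OF assms(3)])
  have hK: "hermitian K" unfolding K_def by (rule assms(3))
  have h\<rho>: "hermitian \<rho>" using assms(2) unfolding density_operator_def positive_semidef_def by simp
  have G: "mtrace (merf (cmat_scale (of_real (sqrt 2 / T)) (Hsum Hs (vec_upd \<theta> j x))) ** \<rho>) =
           mtrace (merf (cmat_scale a H + cmat_scale (of_real (x - \<theta> $ j)) (cmat_scale a K)) ** \<rho>)" for x
    unfolding Hsum_upd H_def K_def a_def cs_add by (simp add: mult.commute)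
  have D: "((\<lambda>x. mtrace (merf (cmat_scale (of_real (sqrt 2 / T)) (Hsum Hs (vec_upd \<theta> j x))) ** \<rho>))
      has_vector_derivative (\<Sum>n. kap n * mtrace (dpow (cmat_scale a H) (cmat_scale a K) (2 * n + 1) ** \<rho>))) (at (\<theta> $ j))"
    by (rule lhs_real) (rule G)
  have trm: "kap n * mtrace (dpow (cmat_scale a H) (cmat_scale a K) (2 * n + 1) ** \<rho>) =
      complex_of_real (2 / T * sqrt (2 / pi) * tk T H K \<rho> n)" for n
  proof -
    have "kap n * mtrace (dpow (cmat_scale a H) (cmat_scale a K) (2 * n + 1) ** \<rho>) =
          kap n * a ^ (2 * n + 1) * gam H K \<rho> (2 * n)"
      using tr_dpow[of a H K "2 * n" \<rho>] by simp
    also have "\<dots> = complex_of_real (2 / T * sqrt (2 / pi) * ((-1) ^ n * (2 / T\<^sup>2) ^ n / (fact n * (2 * real n + 1))))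
                    * complex_of_real (Re (gam H K \<rho> (2 * n)))"
      unfolding a_def coef_identity[OF T] using gam_real[OF hH hK h\<rho>] by metis
    also have "\<dots> = complex_of_real (2 / T * sqrt (2 / pi) * tk T H K \<rho> n)"
      unfolding tk_def of_real_mult[symmetric] by (simp add: mult_ac)
    finally show ?thesis .
  qed
  have "(\<lambda>n. complex_of_real (2 / T * sqrt (2 / pi) * tk T H K \<rho> n)) sums
        complex_of_real (2 / T * sqrt (2 / pi) * integral\<^sup>L (NM \<Otimes>\<^sub>M UM) (FF T H K \<rho>))"
    by (intro sums_of_real sums_mult rhs_sums[OF T])
  hence "(\<Sum>n. kap n * mtrace (dpow (cmat_scale a H) (cmat_scale a K) (2 * n + 1) ** \<rho>)) =
        complex_of_real (2 / T * sqrt (2 / pi) * integral\<^sup>L (NM \<Otimes>\<^sub>M UM) (FF T H K \<rho>))"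
    unfolding trm by (rule sums_unique[symmetric])
  moreover have "(\<lambda>(t, s). Re (mtrace (Hs j ** mexp (cmat_scale (\<i> * of_real (2 * t / T)) (Hsum Hs \<theta>))
                                   ** Uevol (Hsum Hs \<theta>) (2 * s * t / T) \<rho>))) = FF T H K \<rho>"
    unfolding FF_def H_def K_def by (simp add: fun_eq_iff)
  ultimately show ?thesis using D by simp
qed


end
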